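(* Let $X,Y\subseteq\Sigma^*$ be regular languages. Then $\overrightarrow{\mathrm{AH}}_{\mathrm{ned}}(X,Y)\le\overrightarrow{\mathrm{AC}}(X,Y)$.
   Context: An edit path from $x$ to $y$ is a sequence $p=(a_1,b_1)\cdots(a_n,b_n)$ with $(a_i,b_i)\in(\Sigma\cup\{\varepsilon\})^2\setminus\{(\varepsilon,\varepsilon)\}$, $a_1\cdots a_n=x$, $b_1\cdots b_n=y$; $|p|=n$ and $\mathrm{wgt}(p)=|\{i:a_i\ne b_i\}|$. $\mathrm{ed}(x,y)=\min_p\mathrm{wgt}(p)$; $\mathrm{ned}(x,y)=\min_p\mathrm{wgt}(p)/|p|$ ($\mathrm{ned}(\varepsilon,\varepsilon)=0$). $\overrightarrow{\mathrm{AH}}_{\mathrm{ned}}(X,Y)=\lim_{k\to\infty}\sup_{x\in X,|x|\ge k}\inf_{y\in Y}\mathrm{ned}(x,y)$ and $\overrightarrow{\mathrm{AC}}(X,Y)=\lim_{n\to\infty}\sup_{x\in X,|x|\ge n}\inf_{y\in Y}\frac{\mathrm{ed}(x,y)}{|x|}$. *)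

theory Defs
  imports Complex_Main "HOL-Library.Extended_Real"
begin

text \<open>An edit step is a pair (a,b) with a,b in Sigma \<union> {epsilon}, not both epsilon;
  epsilon is modelled by None.\<close>

definition edit_path :: "('a option \<times> 'a option) list \<Rightarrow> 'a list \<Rightarrow> 'a list \<Rightarrow> bool" where
  "edit_path p x y \<longleftrightarrow>
     (\<forall>s\<in>set p. s \<noteq> (None, None)) \<and>
     concat (map (\<lambda>s. case fst s of None \<Rightarrow> [] | Some a \<Rightarrow> [a]) p) = x \<and>
     concat (map (\<lambda>s. case snd s of None \<Rightarrow> [] | Some b \<Rightarrow> [b]) p) = y"

definition wgt :: "('a option \<times> 'a option) list \<Rightarrow> nat" where
  "wgt p = length (filter (\<lambda>s. fst s \<noteq> snd s) p)"

definition ed :: "'a list \<Rightarrow> 'a list \<Rightarrow> nat" where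
  "ed x y = Min {wgt p | p. edit_path p x y}"

text \<open>For x = y = epsilon only the empty path exists, and 0/0 = 0, so ned(eps,eps) = 0.\<close>
definition ned :: "'a list \<Rightarrow> 'a list \<Rightarrow> real" where
  "ned x y = Min {real (wgt p) / real (length p) | p. edit_path p x y}"

definition regular_lang :: "'a set \<Rightarrow> 'a list set \<Rightarrow> bool" where
  "regular_lang \<Sigma> L \<longleftrightarrow> L \<subseteq> lists \<Sigma> \<and>
     (\<exists>(Q::nat set) q0 \<delta> F. finite Q \<and> q0 \<in> Q \<and> F \<subseteq> Q \<and>
        (\<forall>q\<in>Q. \<forall>a\<in>\<Sigma>. \<delta> q a \<in> Q) \<and>
        L = {w \<in> lists \<Sigma>. foldl \<delta> q0 w \<in> F})"

definition AH_ned :: "'a list set \<Rightarrow> 'a list set \<Rightarrow> ereal" where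
  "AH_ned X Y = lim (\<lambda>k::nat. SUP x\<in>{x\<in>X. length x \<ge> k}. INF y\<in>Y. ereal (ned x y))"

definition AC :: "'a list set \<Rightarrow> 'a list set \<Rightarrow> ereal" where
  "AC X Y = lim (\<lambda>n::nat. SUP x\<in>{x\<in>X. length x \<ge> n}.
              INF y\<in>Y. ereal (real (ed x y) / real (length x)))"

end

theory Submission
  imports Defs
begin

lemma len_concat_le:
  assumes "\<And>s. length (F s) \<le> 1"
  shows "length (concat (map F p)) \<le> length p"
proof (induction p)
  case Nil then show ?case by simp
next
  case (Cons a p)
  have "length (F a) \<le> 1" using assms .
  then show ?case using Cons by simp
qed

lemma len_p_le:
  "(\<forall>s\<in>set p. s \<noteq> (None, None)) \<Longrightarrow>
   length p \<le> length (concat (map (\<lambda>s. case fst s of None \<Rightarrow> [] | Some a \<Rightarrow> [a]) p))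
     + length (concat (map (\<lambda>s. case snd s of None \<Rightarrow> [] | Some b \<Rightarrow> [b]) p))"
proof (induction p)
  case Nil then show ?case by simp
next
  case (Cons s p)
  obtain a b where s: "s = (a, b)" by fastforce
  show ?case using Cons s by (cases a; cases b) auto
qed

lemma path_len:
  assumes "edit_path p x y"
  shows "length x \<le> length p" "length p \<le> length x + length y"
proof -
  have "length (concat (map (\<lambda>s. case fst s of None \<Rightarrow> [] | Some a \<Rightarrow> [a]) p)) \<le> length p"
    by (rule len_concat_le) (auto split: option.splits)
  then show "length x \<le> length p" using assms unfolding edit_path_def by simp
  show "length p \<le> length x + length y" using assms len_p_le[of p] unfolding edit_path_def by simp
qed

lemma wgt_le_len: "wgt p \<le> length p"
  unfolding wgt_def by simp

lemma path_exists: "\<exists>p. edit_path p x y"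
proof
  let ?p = "map (\<lambda>a. (Some a, None)) x @ map (\<lambda>b. (None, Some b)) y"
  have 1: "concat (map (\<lambda>s. case fst s of None \<Rightarrow> [] | Some a \<Rightarrow> [a]) (map (\<lambda>a. (Some a, None)) x)) = x"
    by (induction x) auto
  have 2: "concat (map (\<lambda>s. case fst s of None \<Rightarrow> [] | Some a \<Rightarrow> [a]) (map (\<lambda>b. (None, Some b)) y)) = []"
    by (induction y) auto
  have 3: "concat (map (\<lambda>s. case snd s of None \<Rightarrow> [] | Some a \<Rightarrow> [a]) (map (\<lambda>a. (Some a, None)) x)) = []"
    by (induction x) auto
  have 4: "concat (map (\<lambda>s. case snd s of None \<Rightarrow> [] | Some a \<Rightarrow> [a]) (map (\<lambda>b. (None, Some b)) y)) = y"
    by (induction y) auto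
  show "edit_path ?p x y" unfolding edit_path_def map_append concat_append 1 2 3 4 by auto
qed

lemma ed_attained: "\<exists>p. edit_path p x y \<and> wgt p = ed x y"
proof -
  let ?S = "{wgt p | p. edit_path p x y}"
  have "?S \<subseteq> {..length x + length y}"
  proof
    fix v assume "v \<in> ?S"
    then obtain q where q: "edit_path q x y" "v = wgt q" by blast
    then show "v \<in> {..length x + length y}" using path_len(2)[OF q(1)] wgt_le_len[of q] by auto
  qed
  then have "finite ?S" using finite_subset by blast
  moreover have "?S \<noteq> {}" using path_exists by blast
  ultimately have "ed x y \<in> ?S" unfolding ed_def using Min_in by blast
  then show ?thesis by auto
qed

lemma ned_le:
  assumes "edit_path p x y"
  shows "ned x y \<le> real (wgt p) / real (length p)"
proof -
  let ?S = "{real (wgt p) / real (length p) | p. edit_path p x y}"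
  let ?n = "length x + length y"
  have "?S \<subseteq> (\<lambda>(a,b). real a / real b) ` ({..?n} \<times> {..?n})"
  proof
    fix v assume "v \<in> ?S"
    then obtain q where q: "edit_path q x y" "v = real (wgt q) / real (length q)" by blast
    have "(wgt q, length q) \<in> {..?n} \<times> {..?n}" using path_len[OF q(1)] wgt_le_len[of q] by auto
    then show "v \<in> (\<lambda>(a,b). real a / real b) ` ({..?n} \<times> {..?n})" using q(2) by force
  qed
  then have "finite ?S" using finite_subset by blast
  moreover have "real (wgt p) / real (length p) \<in> ?S" using assms by blast
  ultimately show ?thesis unfolding ned_def by (rule Min_le)
qed

lemma ned_le_ed:
  assumes "x \<noteq> []"
  shows "ned x y \<le> real (ed x y) / real (length x)"
proof -
  obtain p where p: "edit_path p x y" "wgt p = ed x y" using ed_attained by blast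
  have "length x \<le> length p" using path_len(1)[OF p(1)] .
  moreover have "0 < length x" using assms by simp
  ultimately have "real (wgt p) / real (length p) \<le> real (wgt p) / real (length x)"
    by (intro divide_left_mono) (auto intro!: mult_pos_pos)
  then show ?thesis using ned_le[OF p(1)] p(2) by simp
qed

theorem mainTheorem15:
  fixes \<Sigma> :: "'a set" and X Y :: "'a list set"
  assumes "finite \<Sigma>"
    and "regular_lang \<Sigma> X" and "regular_lang \<Sigma> Y"
  shows "AH_ned X Y \<le> AC X Y"
proof -
  define f where "f = (\<lambda>k::nat. SUP x\<in>{x\<in>X. length x \<ge> k}. INF y\<in>Y. ereal (ned x y))"
  define g where "g = (\<lambda>n::nat. SUP x\<in>{x\<in>X. length x \<ge> n}.
              INF y\<in>Y. ereal (real (ed x y) / real (length x)))"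
  have df: "decseq f" unfolding f_def decseq_def
    by (auto intro!: SUP_subset_mono)
  have dg: "decseq g" unfolding g_def decseq_def
    by (auto intro!: SUP_subset_mono)
  have le: "\<forall>n\<ge>1. f n \<le> g n"
  proof (intro allI impI)
    fix n :: nat assume n: "n \<ge> 1"
    show "f n \<le> g n" unfolding f_def g_def
    proof (rule SUP_subset_mono[OF order_refl])
      fix x assume "x \<in> {x\<in>X. length x \<ge> n}"
      then have "x \<noteq> []" using n by auto
      then show "(INF y\<in>Y. ereal (ned x y)) \<le> (INF y\<in>Y. ereal (real (ed x y) / real (length x)))"
        by (intro INF_mono') (simp add: ned_le_ed)
    qed
  qed
  have "f \<longlonglongrightarrow> (INF i. f i)" by (rule LIMSEQ_INF[OF df])
  moreover have "g \<longlonglongrightarrow> (INF i. g i)" by (rule LIMSEQ_INF[OF dg])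
  ultimately have "lim f \<le> lim g" using LIMSEQ_le le limI by metis
  then show ?thesis unfolding AH_ned_def AC_def f_def g_def .
qed

end
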